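(* Let $G=(V,E)$ be a finite connected graph (multiple edges and loops allowed) and $\Delta_G$ its graph Laplacian, $\Delta_Gx(v)=\sum_{\{v,w\}\in E}(x(v)-x(w))$, regarded both as a map $\mathbb{R}^V\to\mathbb{R}^V$ and $(\mathbb{R}/\mathbb{Z})^V\to(\mathbb{R}/\mathbb{Z})^V$. Let $X_G=\{x\in(\mathbb{R}/\mathbb{Z})^V:\Delta_Gx=0\}$ (the harmonic mod $1$ points) and $|X_G|$ its number of connected components. Then $|X_G|=|V|^{-1}\det^*(\Delta_G)$, where $\det^*(\Delta_G)$ is the product of the nonzero eigenvalues of $\Delta_G$ on $\mathbb{R}^V$. (Consequently $|X_G|$ equals the number of spanning trees of $G$.)
   Context: In the Laplacian sum each edge $\{v,w\}$ is counted with multiplicity; loops contribute $0$. *)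

theory Defs
  imports "HOL-Analysis.Analysis" "HOL-Computational_Algebra.Polynomial"
begin

text \<open>A finite multigraph (loops allowed) on the finite vertex type 'v is given by a
  symmetric edge-multiplicity function em v w = number of edges between v and w.\<close>

definition multigraph :: "('v::finite \<Rightarrow> 'v \<Rightarrow> nat) \<Rightarrow> bool" where
  "multigraph em \<longleftrightarrow> (\<forall>v w. em v w = em w v)"

definition graph_connected :: "('v::finite \<Rightarrow> 'v \<Rightarrow> nat) \<Rightarrow> bool" where
  "graph_connected em \<longleftrightarrow> (\<forall>u w. (u, w) \<in> {(a, b). 0 < em a b}\<^sup>*)"

definition laplacian :: "('v::finite \<Rightarrow> 'v \<Rightarrow> nat) \<Rightarrow> real^'v \<Rightarrow> real^'v" where
  "laplacian em x = (\<chi> v. \<Sum>w\<in>UNIV. real (em v w) * (x $ v - x $ w))"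

definition charpoly :: "real^'n^'n \<Rightarrow> real poly" where
  "charpoly A = det (\<chi> i j. (if i = j then [:0, 1:] else 0) - [:A $ i $ j:])"

definition det_star :: "real^'n^'n \<Rightarrow> real" where
  "det_star A = prod_mset (filter_mset (\<lambda>e. e \<noteq> 0) (proots (charpoly A)))"

text \<open>The torus (R/Z)^V is realised (homeomorphically, as topological group) as the image of
  R^V under x \<mapsto> (exp(2 pi i x_v))_v inside C^V.\<close>
definition torus_exp :: "real^'v::finite \<Rightarrow> complex^'v" where
  "torus_exp x = (\<chi> v. cis (2 * pi * x $ v))"

text \<open>Harmonic mod 1 points: x in (R/Z)^V with Laplacian x = 0 mod 1, i.e. images of
  real lifts whose Laplacian is integral.\<close>
definition harmonic_mod1 :: "('v::finite \<Rightarrow> 'v \<Rightarrow> nat) \<Rightarrow> (complex^'v) set" where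
  "harmonic_mod1 em = torus_exp ` {x. \<forall>v. laplacian em x $ v \<in> \<int>}"

end

theory Submission
  imports Defs "HOL-Computational_Algebra.Fundamental_Theorem_Algebra"
begin

definition rmat :: "int^'n^'n \<Rightarrow> real^'n^'n" where
  "rmat M = (\<chi> i j. real_of_int (M$i$j))"

definition Sset :: "int^'n::finite^'n \<Rightarrow> (real^'n) set" where
  "Sset M = {x. (\<forall>i. 0 \<le> x$i \<and> x$i < 1) \<and> (\<forall>i. (rmat M *v x)$i \<in> \<int>)}"

lemma rmat_mult: "(rmat M *v x)$i = (\<Sum>j\<in>UNIV. real_of_int (M$i$j) * x$j)"
  by (simp add: rmat_def matrix_vector_mult_def)

lemma int_shift:
  assumes "\<forall>i. (z - w)$i \<in> \<int>"
  shows "(rmat M *v z)$r \<in> \<int> \<longleftrightarrow> (rmat M *v w)$r \<in> \<int>"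
proof -
  have "(rmat M *v z)$r - (rmat M *v w)$r = (\<Sum>j\<in>UNIV. real_of_int (M$r$j) * (z - w)$j)"
    by (simp add: rmat_mult sum_subtractf[symmetric] algebra_simps)
  also have "\<dots> \<in> \<int>" using assms by (intro Ints_sum Ints_mult) auto
  finally have d: "(rmat M *v z)$r - (rmat M *v w)$r \<in> \<int>" .
  show ?thesis
  proof
    assume "(rmat M *v z)$r \<in> \<int>"
    then have "(rmat M *v z)$r - ((rmat M *v z)$r - (rmat M *v w)$r) \<in> \<int>" using d by (rule Ints_diff)
    then show "(rmat M *v w)$r \<in> \<int>" by simp
  next
    assume "(rmat M *v w)$r \<in> \<int>"
    then have "(rmat M *v w)$r + ((rmat M *v z)$r - (rmat M *v w)$r) \<in> \<int>" using d by (rule Ints_add)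
    then show "(rmat M *v z)$r \<in> \<int>" by simp
  qed
qed

definition rel :: "int^'n::finite^'n \<Rightarrow> int^'n^'n \<Rightarrow> bool" where
  "rel M N \<longleftrightarrow> card (Sset M) = card (Sset N) \<and> \<bar>det M\<bar> = \<bar>det N\<bar>"

lemma rel_refl: "rel M M" by (simp add: rel_def)
lemma rel_trans: "rel A B \<Longrightarrow> rel B C \<Longrightarrow> rel A C" by (simp add: rel_def)
lemma rel_sym: "rel A B \<Longrightarrow> rel B A" by (simp add: rel_def)

definition rowadd :: "'n::finite \<Rightarrow> 'n \<Rightarrow> int \<Rightarrow> int^'n^'n \<Rightarrow> int^'n^'n" where
  "rowadd i j q A = (\<chi> k. if k = i then row i A + q *s row j A else row k A)"

definition coladd :: "'n::finite \<Rightarrow> 'n \<Rightarrow> int \<Rightarrow> int^'n^'n \<Rightarrow> int^'n^'n" where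
  "coladd i j q A = transpose (rowadd i j q (transpose A))"

definition rowswap :: "'n::finite \<Rightarrow> 'n \<Rightarrow> int^'n^'n \<Rightarrow> int^'n^'n" where
  "rowswap i j A = (\<chi> k. A $ (Transposition.transpose i j k))"

definition colswap :: "'n::finite \<Rightarrow> 'n \<Rightarrow> int^'n^'n \<Rightarrow> int^'n^'n" where
  "colswap i j A = transpose (rowswap i j (transpose A))"

lemma rowadd_nth: "rowadd i j q A $ r $ c = (if r = i then A$i$c + q * A$j$c else A$r$c)"
  by (simp add: rowadd_def row_def)

lemma coladd_nth: "coladd i j q A $ r $ c = (if c = i then A$r$i + q * A$r$j else A$r$c)"
  by (simp add: coladd_def rowadd_nth transpose_def)

lemma rowswap_nth: "rowswap i j A $ r $ c = A $ (Transposition.transpose i j r) $ c"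
  by (simp add: rowswap_def)

lemma colswap_nth: "colswap i j A $ r $ c = A $ r $ (Transposition.transpose i j c)"
  by (simp add: colswap_def rowswap_def transpose_def)

lemma det_rowadd: "i \<noteq> j \<Longrightarrow> det (rowadd i j q A) = det A"
  unfolding rowadd_def by (rule det_row_operation)

lemma det_coladd: "i \<noteq> j \<Longrightarrow> det (coladd i j q A) = det A"
  unfolding coladd_def det_transpose by (simp add: det_rowadd)

lemma det_rowswap: "\<bar>det (rowswap i j A)\<bar> = \<bar>det A\<bar>"
  unfolding rowswap_def
  by (simp add: det_permute_rows permutes_swap_id sign_swap_id abs_mult)

lemma det_colswap: "\<bar>det (colswap i j A)\<bar> = \<bar>det A\<bar>"
  unfolding colswap_def det_transpose by (simp add: det_rowswap)

lemma Sset_rowadd: assumes "i \<noteq> j" shows "Sset (rowadd i j q A) = Sset A"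
proof -
  have e: "(rmat (rowadd i j q A) *v x)$r = (if r = i then (rmat A *v x)$i + of_int q * (rmat A *v x)$j else (rmat A *v x)$r)" for x r
    by (simp add: rmat_mult rowadd_nth sum.distrib sum_distrib_left algebra_simps)
  have "(\<forall>r. (rmat (rowadd i j q A) *v x)$r \<in> \<int>) \<longleftrightarrow> (\<forall>r. (rmat A *v x)$r \<in> \<int>)" for x
  proof
    assume h: "\<forall>r. (rmat (rowadd i j q A) *v x)$r \<in> \<int>"
    show "\<forall>r. (rmat A *v x)$r \<in> \<int>"
    proof
      fix r
      show "(rmat A *v x)$r \<in> \<int>"
      proof (cases "r = i")
        case True
        have a: "(rmat A *v x)$i + of_int q * (rmat A *v x)$j \<in> \<int>" using h[rule_format, of i] e by simp
        have b: "(rmat A *v x)$j \<in> \<int>" using h[rule_format, of j] e assms by simp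
        have "(rmat A *v x)$i + of_int q * (rmat A *v x)$j - of_int q * (rmat A *v x)$j \<in> \<int>"
          using a b by (intro Ints_diff Ints_mult) auto
        then show ?thesis using True by simp
      next
        case False then show ?thesis using h[rule_format, of r] e by simp
      qed
    qed
  next
    assume h: "\<forall>r. (rmat A *v x)$r \<in> \<int>"
    then show "\<forall>r. (rmat (rowadd i j q A) *v x)$r \<in> \<int>"
      by (auto simp: e intro!: Ints_add Ints_mult)
  qed
  then show ?thesis by (simp add: Sset_def)
qed

lemma Sset_rowswap: "Sset (rowswap i j A) = Sset A"
proof -
  have e: "(rmat (rowswap i j A) *v x)$r = (rmat A *v x)$(Transposition.transpose i j r)" for x r
    by (simp add: rmat_mult rowswap_nth)
  have "(\<forall>r. (rmat (rowswap i j A) *v x)$r \<in> \<int>) \<longleftrightarrow> (\<forall>r. (rmat A *v x)$r \<in> \<int>)" for x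
    unfolding e by (metis transpose_involutory)
  then show ?thesis by (simp add: Sset_def)
qed

lemma rel_rowadd: "i \<noteq> j \<Longrightarrow> rel A (rowadd i j q A)"
  by (simp add: rel_def Sset_rowadd det_rowadd)

lemma rel_rowswap: "rel A (rowswap i j A)"
  by (simp add: rel_def Sset_rowswap det_rowswap)

lemma Sset_colswap: "card (Sset (colswap i j A)) = card (Sset A)"
proof -
  let ?s = "Transposition.transpose i j"
  let ?f = "\<lambda>x::real^'a. \<chi> k. x $ (?s k)"
  have e: "(rmat (colswap i j A) *v x)$r = (rmat A *v ?f x)$r" for x r
  proof -
    have "(rmat (colswap i j A) *v x)$r = (\<Sum>c\<in>UNIV. real_of_int (A$r$(?s c)) * x$c)"
      by (simp add: rmat_mult colswap_nth)
    also have "\<dots> = (\<Sum>c\<in>UNIV. real_of_int (A$r$(?s (?s c))) * x$(?s c))"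
      by (rule sum.reindex_bij_betw[symmetric, of ?s]) (simp add: bij_betw_def inj_on_def, metis transpose_involutory)
    also have "\<dots> = (rmat A *v ?f x)$r" by (simp add: rmat_mult)
    finally show ?thesis .
  qed
  have ff: "?f (?f x) = x" for x by (simp add: vec_eq_iff)
  have "bij_betw ?f (Sset (colswap i j A)) (Sset A)"
  proof (rule bij_betw_byWitness[where f' = ?f])
    show "\<forall>a\<in>Sset (colswap i j A). ?f (?f a) = a" by (simp add: ff)
    show "\<forall>a\<in>Sset A. ?f (?f a) = a" by (simp add: ff)
    show "?f ` Sset (colswap i j A) \<subseteq> Sset A"
      by (auto simp: Sset_def e ff)
    show "?f ` Sset A \<subseteq> Sset (colswap i j A)"
      by (auto simp: Sset_def e ff)
  qed
  then show ?thesis by (rule bij_betw_same_card)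
qed

lemma rel_colswap: "rel A (colswap i j A)"
  by (simp add: rel_def Sset_colswap det_colswap)

lemma Sset_coladd:
  assumes ij: "i \<noteq> j"
  shows "card (Sset (coladd i j q A)) = card (Sset A)"
proof -
  let ?f = "\<lambda>x::real^'a. \<chi> k. if k = j then frac (x$j + of_int q * x$i) else x$k"
  let ?g = "\<lambda>x::real^'a. \<chi> k. if k = j then frac (x$j - of_int q * x$i) else x$k"
  let ?y = "\<lambda>x::real^'a. \<chi> k. if k = j then x$j + of_int q * x$i else x$k"
  have e1: "(rmat (coladd i j q A) *v x)$r = (rmat A *v ?y x)$r" for x r
  proof -
    have en: "real_of_int (coladd i j q A $ r $ c) * x$c = real_of_int (A$r$c) * x$c + (if c = i then of_int q * real_of_int (A$r$j) * x$i else 0)" for c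
      by (simp add: coladd_nth algebra_simps)
    have en2: "real_of_int (A$r$c) * (?y x)$c = real_of_int (A$r$c) * x$c + (if c = j then of_int q * real_of_int (A$r$j) * x$i else 0)" for c
      by (simp add: algebra_simps)
    have "(rmat (coladd i j q A) *v x)$r = (\<Sum>c\<in>UNIV. real_of_int (A$r$c) * x$c) + of_int q * real_of_int (A$r$j) * x$i"
      unfolding rmat_mult en by (simp add: sum.distrib)
    also have "\<dots> = (rmat A *v ?y x)$r"
      unfolding rmat_mult en2 by (simp add: sum.distrib)
    finally show ?thesis .
  qed
  have fy: "\<forall>k. (?y x - ?f x)$k \<in> \<int>" for x
    by (auto simp: frac_def)
  have gi: "\<forall>k. ((?g x) - (\<chi> k. if k = j then x$j - of_int q * x$i else x$k))$k \<in> \<int>" for x :: "real^'a"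
    by (auto simp: frac_def)
  have S: "0 \<le> x$k \<and> x$k < 1 \<Longrightarrow> frac (x$k) = x$k" for x :: "real^'a" and k
    by (simp add: frac_eq)
  show ?thesis
  proof (rule bij_betw_same_card[of ?f])
    show "bij_betw ?f (Sset (coladd i j q A)) (Sset A)"
    proof (rule bij_betw_byWitness[where f' = ?g])
      show "\<forall>a\<in>Sset (coladd i j q A). ?g (?f a) = a"
      proof
        fix a assume a: "a \<in> Sset (coladd i j q A)"
        have "frac (frac (a$j + of_int q * a$i) - of_int q * a$i) = a$j"
        proof -
          have "frac (frac (a$j + of_int q * a$i) - of_int q * a$i) = frac (a$j - of_int \<lfloor>a$j + of_int q * a$i\<rfloor>)"
            by (simp add: frac_def algebra_simps)
          also have "\<dots> = frac (a$j)" by (simp add: frac_def)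
          also have "\<dots> = a$j" using a by (simp add: Sset_def frac_eq)
          finally show ?thesis .
        qed
        then show "?g (?f a) = a" using ij by (simp add: vec_eq_iff)
      qed
      show "\<forall>a\<in>Sset A. ?f (?g a) = a"
      proof
        fix a assume a: "a \<in> Sset A"
        have "frac (frac (a$j - of_int q * a$i) + of_int q * a$i) = a$j"
        proof -
          have "frac (frac (a$j - of_int q * a$i) + of_int q * a$i) = frac (a$j - of_int \<lfloor>a$j - of_int q * a$i\<rfloor>)"
            by (simp add: frac_def algebra_simps)
          also have "\<dots> = frac (a$j)" by (simp add: frac_def)
          also have "\<dots> = a$j" using a by (simp add: Sset_def frac_eq)
          finally show ?thesis .
        qed
        then show "?f (?g a) = a" using ij by (simp add: vec_eq_iff)
      qed
      show "?f ` Sset (coladd i j q A) \<subseteq> Sset A"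
      proof
        fix z assume "z \<in> ?f ` Sset (coladd i j q A)"
        then obtain x where x: "x \<in> Sset (coladd i j q A)" and z: "z = ?f x" by auto
        have "\<forall>r. (rmat A *v z)$r \<in> \<int>"
          using x int_shift[OF fy[of x], of A] unfolding z Sset_def e1 by auto
        moreover have "\<forall>k. 0 \<le> z$k \<and> z$k < 1" using x by (auto simp: z Sset_def frac_lt_1)
        ultimately show "z \<in> Sset A" by (simp add: Sset_def)
      qed
      show "?g ` Sset A \<subseteq> Sset (coladd i j q A)"
      proof
        fix z assume "z \<in> ?g ` Sset A"
        then obtain x where x: "x \<in> Sset A" and z: "z = ?g x" by auto
        have "\<forall>k. (?y z - x)$k \<in> \<int>"
        proof
          fix k
          show "(?y z - x)$k \<in> \<int>"
          proof (cases "k = j")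
            case True
            have "(?y z - x)$k = frac (x$j - of_int q * x$i) - (x$j - of_int q * x$i)"
              using True ij z by simp
            also have "\<dots> \<in> \<int>" by (simp add: frac_def)
            finally show ?thesis .
          qed (simp add: z)
        qed
        then have "\<forall>r. (rmat (coladd i j q A) *v z)$r \<in> \<int>"
          using x int_shift[of "?y z" x A] unfolding Sset_def e1 by auto
        moreover have "\<forall>k. 0 \<le> z$k \<and> z$k < 1" using x by (auto simp: z Sset_def frac_lt_1)
        ultimately show "z \<in> Sset (coladd i j q A)" by (simp add: Sset_def)
      qed
    qed
  qed
qed

lemma rel_coladd: "i \<noteq> j \<Longrightarrow> rel A (coladd i j q A)"
  by (simp add: rel_def Sset_coladd det_coladd)

lemma card_Aset:
  fixes d :: int
  assumes d: "d \<noteq> 0"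
  shows "card {x::real. 0 \<le> x \<and> x < 1 \<and> of_int d * x \<in> \<int>} = nat \<bar>d\<bar>"
proof -
  let ?f = "\<lambda>k::int. real_of_int k / real_of_int \<bar>d\<bar>"
  have dpos: "real_of_int \<bar>d\<bar> > 0" using d by simp
  have ad: "real_of_int \<bar>d\<bar> * x = (if d > 0 then of_int d * x else - (of_int d * x))" for x :: real
    by simp
  have eq: "{x::real. 0 \<le> x \<and> x < 1 \<and> of_int d * x \<in> \<int>} = ?f ` {0..<\<bar>d\<bar>}"
  proof (intro equalityI subsetI)
    fix x assume x: "x \<in> {x::real. 0 \<le> x \<and> x < 1 \<and> of_int d * x \<in> \<int>}"
    have "real_of_int \<bar>d\<bar> * x \<in> \<int>"
      unfolding ad using x by (auto intro: Ints_minus)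
    then obtain k where k: "real_of_int \<bar>d\<bar> * x = of_int k" by (auto elim: Ints_cases)
    have "0 \<le> real_of_int \<bar>d\<bar> * x" using x dpos by simp
    then have "0 \<le> k" using k by simp
    moreover have "real_of_int \<bar>d\<bar> * x < real_of_int \<bar>d\<bar> * 1"
      using x dpos by (intro mult_strict_left_mono) auto
    then have "k < \<bar>d\<bar>" using k by simp
    ultimately have "k \<in> {0..<\<bar>d\<bar>}" by simp
    moreover have "x = ?f k" using k dpos by (simp add: field_simps)
    ultimately show "x \<in> ?f ` {0..<\<bar>d\<bar>}" by blast
  next
    fix x assume "x \<in> ?f ` {0..<\<bar>d\<bar>}"
    then obtain k where k: "0 \<le> k" "k < \<bar>d\<bar>" and x: "x = ?f k" by auto
    have "0 \<le> x" using k dpos x by simp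
    moreover have "x < 1" using k dpos x by simp
    moreover have "real_of_int \<bar>d\<bar> * x = of_int k" using x dpos by simp
    then have "real_of_int \<bar>d\<bar> * x \<in> \<int>" by simp
    then have "of_int d * x \<in> \<int>" unfolding ad by (cases "d > 0") (simp, metis Ints_minus minus_minus)
    ultimately show "x \<in> {x::real. 0 \<le> x \<and> x < 1 \<and> of_int d * x \<in> \<int>}" by simp
  qed
  have "inj_on ?f {0..<\<bar>d\<bar>}" using dpos by (auto simp: inj_on_def)
  then show ?thesis unfolding eq by (simp add: card_image)
qed

lemma card_vec_box:
  fixes A :: "'n::finite \<Rightarrow> 'a set"
  shows "card {x::'a^'n. \<forall>i. x$i \<in> A i} = (\<Prod>i\<in>UNIV. card (A i))"
proof -
  have "bij_betw vec_lambda (PiE UNIV A) {x::'a^'n. \<forall>i. x$i \<in> A i}"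
  proof (rule bij_betw_byWitness[where f' = vec_nth])
    show "\<forall>a\<in>PiE UNIV A. vec_nth (vec_lambda a) = a" by (auto simp: fun_eq_iff)
    show "\<forall>a\<in>{x::'a^'n. \<forall>i. x$i \<in> A i}. vec_lambda (vec_nth a) = a" by simp
    show "vec_lambda ` PiE UNIV A \<subseteq> {x::'a^'n. \<forall>i. x$i \<in> A i}" by auto
    show "vec_nth ` {x::'a^'n. \<forall>i. x$i \<in> A i} \<subseteq> PiE UNIV A" by auto
  qed
  then have "card {x::'a^'n. \<forall>i. x$i \<in> A i} = card (PiE UNIV A)"
    by (simp add: bij_betw_same_card)
  then show ?thesis by (simp add: card_PiE)
qed

lemma int_abs_prod: "\<bar>\<Prod>i\<in>A. f i\<bar> = (\<Prod>i\<in>A. \<bar>f i :: int\<bar>)"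
  by (induction A rule: infinite_finite_induct) (auto simp: abs_mult)

definition clean :: "'n::finite set \<Rightarrow> int^'n^'n \<Rightarrow> bool" where
  "clean D M \<longleftrightarrow> (\<forall>i j. i \<noteq> j \<and> (i \<in> D \<or> j \<in> D) \<longrightarrow> M$i$j = 0)"

lemma card_Sset_diag:
  assumes c: "clean UNIV M" and nz: "\<forall>i. M$i$i \<noteq> 0"
  shows "card (Sset M) = nat \<bar>det M\<bar>"
proof -
  have off: "i \<noteq> j \<Longrightarrow> M$i$j = 0" for i j using c by (simp add: clean_def)
  have mv: "(rmat M *v x)$i = of_int (M$i$i) * x$i" for x i
  proof -
    have "(rmat M *v x)$i = (\<Sum>j\<in>UNIV. if j = i then of_int (M$i$i) * x$i else 0)"
      unfolding rmat_mult by (rule sum.cong) (auto simp: off)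
    then show ?thesis by simp
  qed
  define B where "B i = {y::real. 0 \<le> y \<and> y < 1 \<and> of_int (M$i$i) * y \<in> \<int>}" for i
  have "Sset M = {x. \<forall>i. x$i \<in> B i}"
    by (auto simp: Sset_def mv B_def)
  then have "card (Sset M) = (\<Prod>i\<in>UNIV. card (B i))"
    by (simp add: card_vec_box)
  also have "\<dots> = (\<Prod>i\<in>UNIV. nat \<bar>M$i$i\<bar>)"
    by (rule prod.cong) (simp_all add: B_def card_Aset nz)
  also have "\<dots> = nat \<bar>\<Prod>i\<in>UNIV. M$i$i\<bar>"
  proof -
    have "int (\<Prod>i\<in>UNIV. nat \<bar>M$i$i\<bar>) = (\<Prod>i\<in>UNIV. \<bar>M$i$i\<bar>)" by simp
    also have "\<dots> = \<bar>\<Prod>i\<in>UNIV. M$i$i\<bar>" by (rule int_abs_prod[symmetric])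
    finally show ?thesis by linarith
  qed
  also have "\<dots> = nat \<bar>det M\<bar>" by (simp add: det_diagonal off)
  finally show ?thesis .
qed

lemma clean_rowadd: assumes "clean D M" "r \<notin> D" "i \<notin> D" shows "clean D (rowadd r i q M)"
  unfolding clean_def rowadd_nth
proof (intro allI impI)
  fix x y assume h: "x \<noteq> y \<and> (x \<in> D \<or> y \<in> D)"
  show "(if x = r then M $ r $ y + q * M $ i $ y else M $ x $ y) = 0"
  proof (cases "x = r")
    case True
    then have "y \<in> D" using h assms by auto
    note T = True
    moreover have "i \<noteq> y" using \<open>y \<in> D\<close> assms by auto
    ultimately have "M$r$y = 0" "M$i$y = 0" using assms h True unfolding clean_def by auto
    then show ?thesis using T by simp
  next
    case False then show ?thesis using assms h unfolding clean_def by auto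
  qed
qed

lemma clean_coladd: assumes "clean D M" "c \<notin> D" "i \<notin> D" shows "clean D (coladd c i q M)"
  unfolding clean_def coladd_nth
proof (intro allI impI)
  fix x y assume h: "x \<noteq> y \<and> (x \<in> D \<or> y \<in> D)"
  show "(if y = c then M $ x $ c + q * M $ x $ i else M $ x $ y) = 0"
  proof (cases "y = c")
    case True
    then have "x \<in> D" using h assms by auto
    note T = True
    moreover have "x \<noteq> i" using \<open>x \<in> D\<close> assms by auto
    ultimately have "M$x$c = 0" "M$x$i = 0" using assms h True unfolding clean_def by auto
    then show ?thesis using T by simp
  next
    case False then show ?thesis using assms h unfolding clean_def by auto
  qed
qed

lemma swap_mem: "i \<notin> D \<Longrightarrow> r \<notin> D \<Longrightarrow> Transposition.transpose i r x \<in> D \<longleftrightarrow> x \<in> D"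
  by (auto simp: Transposition.transpose_def)

lemma clean_rowswap: assumes "clean D M" "i \<notin> D" "r \<notin> D" shows "clean D (rowswap i r M)"
  unfolding clean_def rowswap_nth
proof (intro allI impI)
  fix x y assume h: "x \<noteq> y \<and> (x \<in> D \<or> y \<in> D)"
  let ?s = "Transposition.transpose i r"
  have "?s x \<noteq> y"
  proof
    assume e: "?s x = y"
    show False
    proof (cases "x \<in> D")
      case True then have "?s x = x" using assms by (auto simp: Transposition.transpose_def)
      then show False using e h by simp
    next
      case False then have "y \<in> D" using h by simp
      then show False using e False swap_mem[OF assms(2,3), of x] by simp
    qed
  qed
  moreover have "?s x \<in> D \<or> y \<in> D" using h swap_mem[OF assms(2,3), of x] by simp
  ultimately show "M $ ?s x $ y = 0" using assms(1) unfolding clean_def by blast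
qed

lemma clean_colswap: assumes "clean D M" "i \<notin> D" "r \<notin> D" shows "clean D (colswap i r M)"
  unfolding clean_def colswap_nth
proof (intro allI impI)
  fix x y assume h: "x \<noteq> y \<and> (x \<in> D \<or> y \<in> D)"
  let ?s = "Transposition.transpose i r"
  have "x \<noteq> ?s y"
  proof
    assume e: "x = ?s y"
    show False
    proof (cases "y \<in> D")
      case True then have "?s y = y" using assms by (auto simp: Transposition.transpose_def)
      then show False using e h by simp
    next
      case False then have "x \<in> D" using h by simp
      then show False using e False swap_mem[OF assms(2,3), of y] by simp
    qed
  qed
  moreover have "x \<in> D \<or> ?s y \<in> D" using h swap_mem[OF assms(2,3), of y] by simp
  ultimately show "M $ x $ ?s y = 0" using assms(1) unfolding clean_def by blast
qed


definition cnt :: "'n::finite set \<Rightarrow> 'n \<Rightarrow> int^'n^'n \<Rightarrow> nat" where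
  "cnt D i M = card {r. r \<notin> D \<and> r \<noteq> i \<and> M$r$i \<noteq> 0} + card {c. c \<notin> D \<and> c \<noteq> i \<and> M$i$c \<noteq> 0}"

lemma clean_insert:
  assumes "clean D M" "cnt D i M = 0"
  shows "clean (insert i D) M"
proof -
  have r: "r \<notin> D \<Longrightarrow> r \<noteq> i \<Longrightarrow> M$r$i = 0" for r
    using assms(2) unfolding cnt_def by auto
  have c: "c \<notin> D \<Longrightarrow> c \<noteq> i \<Longrightarrow> M$i$c = 0" for c
    using assms(2) unfolding cnt_def by auto
  show ?thesis using assms(1) r c unfolding clean_def by blast
qed

lemma inner_step:
  assumes iD: "i \<notin> D"
  shows "\<forall>M. clean D M \<longrightarrow> M$i$i \<noteq> 0 \<longrightarrow> nat \<bar>M$i$i\<bar> = a \<longrightarrow> cnt D i M = k \<longrightarrow>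
          (\<exists>M'. clean (insert i D) M' \<and> rel M M')"
proof (induction a arbitrary: k rule: less_induct)
  case (less a)
  note outer = less.IH
  show ?case
  proof (induction k rule: less_induct)
    case (less k)
    show ?case
    proof (intro allI impI)
      fix M assume cl: "clean D M" and nz: "M$i$i \<noteq> 0" and aa: "nat \<bar>M$i$i\<bar> = a" and kk: "cnt D i M = k"
      let ?R = "{r. r \<notin> D \<and> r \<noteq> i \<and> M$r$i \<noteq> 0}"
      let ?C = "{c. c \<notin> D \<and> c \<noteq> i \<and> M$i$c \<noteq> 0}"
      show "\<exists>M'. clean (insert i D) M' \<and> rel M M'"
      proof (cases "cnt D i M = 0")
        case True
        then show ?thesis using clean_insert[OF cl True] rel_refl by blast
      next
        case False
        then have "?R \<noteq> {} \<or> ?C \<noteq> {}" unfolding cnt_def by auto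
        then show ?thesis
        proof
          assume "?R \<noteq> {}"
          then obtain r where rD: "r \<notin> D" and ri: "r \<noteq> i" and rnz: "M$r$i \<noteq> 0" by auto
          define q where "q = M$r$i div M$i$i"
          define M1 where "M1 = rowadd r i (- q) M"
          have M1rel: "rel M M1" unfolding M1_def using ri by (rule rel_rowadd)
          have M1cl: "clean D M1" unfolding M1_def using cl rD iD by (rule clean_rowadd)
          have M1ii: "M1$i$i = M$i$i" using ri by (simp add: M1_def rowadd_nth)
          have M1ri: "M1$r$i = M$r$i mod M$i$i"
            by (simp add: M1_def rowadd_nth q_def algebra_simps minus_div_mult_eq_mod[symmetric])
          show ?thesis
          proof (cases "M1$r$i = 0")
            case True
            have R1: "{r'. r' \<notin> D \<and> r' \<noteq> i \<and> M1$r'$i \<noteq> 0} = ?R - {r}"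
              using True by (auto simp: M1_def rowadd_nth)
            have C1: "{c. c \<notin> D \<and> c \<noteq> i \<and> M1$i$c \<noteq> 0} = ?C"
              using ri by (auto simp: M1_def rowadd_nth)
            have "card (?R - {r}) < card ?R"
              using rD ri rnz by (intro card_Diff1_less) auto
            then have "cnt D i M1 < k" unfolding kk[symmetric] cnt_def R1 C1 by simp
            then obtain M' where "clean (insert i D) M'" "rel M1 M'"
              using less.IH M1cl M1ii nz aa by force
            then show ?thesis using M1rel rel_trans by blast
          next
            case False
            define M2 where "M2 = rowswap i r M1"
            have M2rel: "rel M1 M2" unfolding M2_def by (rule rel_rowswap)
            have M2cl: "clean D M2" unfolding M2_def using M1cl iD rD by (rule clean_rowswap)
            have M2ii: "M2$i$i = M1$r$i" by (simp add: M2_def rowswap_nth)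
            have lt: "nat \<bar>M2$i$i\<bar> < a" unfolding M2ii M1ri aa[symmetric]
              using abs_mod_less[OF nz, of "M$r$i"] by simp
            have "M2$i$i \<noteq> 0" using False M2ii by simp
            then obtain M' where "clean (insert i D) M'" "rel M2 M'"
              using outer[OF lt] M2cl by blast
            then show ?thesis using M1rel M2rel rel_trans by blast
          qed
        next
          assume "?C \<noteq> {}"
          then obtain c where cD: "c \<notin> D" and ci: "c \<noteq> i" and cnz: "M$i$c \<noteq> 0" by auto
          define q where "q = M$i$c div M$i$i"
          define M1 where "M1 = coladd c i (- q) M"
          have M1rel: "rel M M1" unfolding M1_def using ci by (rule rel_coladd)
          have M1cl: "clean D M1" unfolding M1_def using cl cD iD by (rule clean_coladd)
          have M1ii: "M1$i$i = M$i$i" using ci by (simp add: M1_def coladd_nth)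
          have M1ic: "M1$i$c = M$i$c mod M$i$i"
            by (simp add: M1_def coladd_nth q_def algebra_simps minus_div_mult_eq_mod[symmetric])
          show ?thesis
          proof (cases "M1$i$c = 0")
            case True
            have R1: "{r'. r' \<notin> D \<and> r' \<noteq> i \<and> M1$r'$i \<noteq> 0} = ?R"
              using ci by (auto simp: M1_def coladd_nth)
            have C1: "{c'. c' \<notin> D \<and> c' \<noteq> i \<and> M1$i$c' \<noteq> 0} = ?C - {c}"
              using True by (auto simp: M1_def coladd_nth)
            have "card (?C - {c}) < card ?C"
              using cD ci cnz by (intro card_Diff1_less) auto
            then have "cnt D i M1 < k" unfolding kk[symmetric] cnt_def R1 C1 by simp
            then obtain M' where "clean (insert i D) M'" "rel M1 M'"
              using less.IH M1cl M1ii nz aa by force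
            then show ?thesis using M1rel rel_trans by blast
          next
            case False
            define M2 where "M2 = colswap i c M1"
            have M2rel: "rel M1 M2" unfolding M2_def by (rule rel_colswap)
            have M2cl: "clean D M2" unfolding M2_def using M1cl iD cD by (rule clean_colswap)
            have M2ii: "M2$i$i = M1$i$c" by (simp add: M2_def colswap_nth)
            have lt: "nat \<bar>M2$i$i\<bar> < a" unfolding M2ii M1ic aa[symmetric]
              using abs_mod_less[OF nz, of "M$i$c"] by simp
            have "M2$i$i \<noteq> 0" using False M2ii by simp
            then obtain M' where "clean (insert i D) M'" "rel M2 M'"
              using outer[OF lt] M2cl by blast
            then show ?thesis using M1rel M2rel rel_trans by blast
          qed
        qed
      qed
    qed
  qed
qed

lemma inner:
  assumes "clean D M" "i \<notin> D" "M$i$i \<noteq> 0"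
  shows "\<exists>M'. clean (insert i D) M' \<and> rel M M'"
  using inner_step[OF assms(2)] assms(1,3) by blast

lemma outer_step:
  "\<forall>D M. clean D M \<longrightarrow> card (- D) = m \<longrightarrow> (\<exists>M'. clean UNIV M' \<and> rel M M')"
proof (induction m)
  case 0
  show ?case
  proof (intro allI impI)
    fix D :: "'a set" and M assume "clean D M" "card (- D) = 0"
    then have "D = UNIV" by (metis double_compl Compl_empty_eq card_0_eq finite)
    then show "\<exists>M'. clean UNIV M' \<and> rel M M'" using \<open>clean D M\<close> rel_refl by blast
  qed
next
  case (Suc m)
  show ?case
  proof (intro allI impI)
    fix D :: "'a set" and M assume cl: "clean D M" and cD: "card (- D) = Suc m"
    then obtain i where iD: "i \<notin> D" by (metis Compl_iff card.empty ex_in_conv nat.simps(3))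
    have cD': "card (- insert i D) = m" using cD iD
      by (metis Compl_insert card_Diff_singleton diff_Suc_1 finite ComplI)
    have fin: "clean (insert i D) M' \<Longrightarrow> rel M M' \<Longrightarrow> \<exists>M''. clean UNIV M'' \<and> rel M M''" for M'
      using Suc.IH cD' rel_trans by blast
    show "\<exists>M'. clean UNIV M' \<and> rel M M'"
    proof (cases "M$i$i \<noteq> 0")
      case True
      then show ?thesis using inner[OF cl iD True] fin by blast
    next
      case F1: False
      show ?thesis
      proof (cases "\<exists>j. j \<notin> D \<and> j \<noteq> i \<and> M$i$j \<noteq> 0")
        case True
        then obtain j where j: "j \<notin> D" "j \<noteq> i" "M$i$j \<noteq> 0" by blast
        let ?M1 = "colswap i j M"
        have "?M1$i$i \<noteq> 0" using j by (simp add: colswap_nth)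
        moreover have "clean D ?M1" using cl iD j by (intro clean_colswap)
        ultimately obtain M' where "clean (insert i D) M'" "rel ?M1 M'" using inner iD by blast
        then show ?thesis using fin rel_colswap rel_trans by blast
      next
        case F2: False
        show ?thesis
        proof (cases "\<exists>r. r \<notin> D \<and> r \<noteq> i \<and> M$r$i \<noteq> 0")
          case True
          then obtain r where r: "r \<notin> D" "r \<noteq> i" "M$r$i \<noteq> 0" by blast
          let ?M1 = "rowswap i r M"
          have "?M1$i$i \<noteq> 0" using r by (simp add: rowswap_nth)
          moreover have "clean D ?M1" using cl iD r by (intro clean_rowswap)
          ultimately obtain M' where "clean (insert i D) M'" "rel ?M1 M'" using inner iD by blast
          then show ?thesis using fin rel_rowswap rel_trans by blast
        next
          case F3: False
          have "cnt D i M = 0" using F2 F3 unfolding cnt_def by auto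
          then show ?thesis using clean_insert[OF cl] fin rel_refl by blast
        qed
      qed
    qed
  qed
qed

theorem card_Sset_det:
  fixes M :: "int^'n::finite^'n"
  assumes "det M \<noteq> 0"
  shows "card (Sset M) = nat \<bar>det M\<bar>"
proof -
  have "clean {} M" by (simp add: clean_def)
  then obtain M' where cl: "clean UNIV M'" and r: "rel M M'" using outer_step by blast
  have off: "i \<noteq> j \<Longrightarrow> M'$i$j = 0" for i j using cl by (simp add: clean_def)
  have "det M' \<noteq> 0" using r assms unfolding rel_def by (metis abs_eq_0)
  then have "\<forall>i. M'$i$i \<noteq> 0" by (simp add: det_diagonal off)
  then have "card (Sset M') = nat \<bar>det M'\<bar>" using card_Sset_diag cl by blast
  then show ?thesis using r by (simp add: rel_def)
qed


lemma hom_sum: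
  assumes add: "\<And>a b. f (a + b) = f a + f b" and z: "f 0 = 0"
  shows "f (sum g S) = sum (\<lambda>x. f (g x)) S"
  by (induction S rule: infinite_finite_induct) (simp_all add: add z)

lemma hom_prod:
  assumes mult: "\<And>a b. f (a * b) = f a * f b" and o: "f 1 = 1"
  shows "f (prod g S) = prod (\<lambda>x. f (g x)) S"
  by (induction S rule: infinite_finite_induct) (simp_all add: mult o)

lemma det_hom:
  fixes f :: "'a::comm_ring_1 \<Rightarrow> 'b::comm_ring_1"
  assumes add: "\<And>a b. f (a + b) = f a + f b" and mult: "\<And>a b. f (a * b) = f a * f b"
    and z: "f 0 = 0" and o: "f 1 = 1" and neg: "\<And>a. f (- a) = - f a"
  shows "f (det A) = det (\<chi> i j. f (A$i$j) :: 'b^'n::finite^'n)"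
proof -
  have s: "f (of_int (sign p)) = of_int (sign p)" for p :: "'n \<Rightarrow> 'n"
    by (simp add: sign_def o neg)
  show ?thesis
    unfolding det_def
    by (simp add: hom_sum[of f, OF add z] mult hom_prod[of f, OF mult o] s)
qed

lemma det_of_int: "det (\<chi> i j. real_of_int (A$i$j) :: real^'n::finite^'n) = real_of_int (det A)"
  using det_hom[of real_of_int A] by simp

lemma det_row_addcomb:
  fixes A :: "'a::field^'n::finite^'n"
  shows "det (\<chi> i. if i = k then row k A + (\<Sum>j\<in>UNIV-{k}. c j *s row j A) else row i A) = det A"
proof (rule det_row_span)
  show "(\<Sum>j\<in>UNIV-{k}. c j *s row j A) \<in> vec.span {row j A |j. j \<noteq> k}"
    by (intro vec.span_sum vec.span_scale vec.span_base) auto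
qed

lemma det_I_row:
  fixes c :: "'n::finite \<Rightarrow> 'a::field"
  shows "det (\<chi> i j. (if i = j then 1 else 0) + (if i = k \<and> j \<noteq> k then c j else 0) :: 'a^'n^'n) = 1"
proof -
  have "(\<chi> i j. (if i = j then 1 else 0) + (if i = k \<and> j \<noteq> k then c j else 0) :: 'a^'n^'n)
      = (\<chi> i. if i = k then row k (mat 1) + (\<Sum>j\<in>UNIV-{k}. c j *s row j (mat 1)) else row i (mat 1))"
  proof -
    have r: "(\<Sum>j\<in>UNIV-{k}. c j *s row j (mat 1 :: 'a^'n^'n)) $ l = (if l \<noteq> k then c l else 0)" for l
    proof -
      have "(\<Sum>j\<in>UNIV-{k}. c j *s row j (mat 1 :: 'a^'n^'n)) $ l = (\<Sum>j\<in>UNIV-{k}. c j * (if j = l then 1 else 0))"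
        by (simp add: row_def mat_def sum_component)
      also have "\<dots> = (\<Sum>j\<in>UNIV-{k}. if j = l then c j else 0)"
        by (rule sum.cong) auto
      finally show ?thesis by (simp add: sum.delta)
    qed
    have r': "(\<Sum>j\<in>UNIV-{k}. c j *s row j (mat 1 :: 'a^'n^'n)) = (\<chi> l. if l \<noteq> k then c l else 0)"
      unfolding vec_eq_iff r by simp
    show ?thesis unfolding r' by (simp add: vec_eq_iff row_def mat_def)
  qed
  then show ?thesis using det_row_addcomb[where k=k and c=c and A="mat 1 :: 'a^'n^'n"] by simp
qed

lemma det_I_col:
  fixes c :: "'n::finite \<Rightarrow> 'a::field"
  shows "det (\<chi> i j. (if i = j then 1 else 0) + (if j = k \<and> i \<noteq> k then c i else 0) :: 'a^'n^'n) = 1"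
proof -
  have "(\<chi> i j. (if i = j then 1 else 0) + (if j = k \<and> i \<noteq> k then c i else 0) :: 'a^'n^'n)
     = transpose (\<chi> i j. (if i = j then 1 else 0) + (if i = k \<and> j \<noteq> k then c j else 0))"
    by (simp add: vec_eq_iff transpose_def)
  then show ?thesis using det_I_row[of k c] by simp
qed

lemma det_colsum:
  fixes A :: "'a::field^'n::finite^'n"
  assumes s: "\<And>j. (\<Sum>i\<in>UNIV. A$i$j) = s"
  shows "det A = s * det (\<chi> i. if i = k then (\<chi> j. 1) else row i A)"
proof -
  have "row k A + (\<Sum>j\<in>UNIV-{k}. 1 *s row j A) = s *s (\<chi> j. 1)"
  proof -
    have "row k A + (\<Sum>j\<in>UNIV-{k}. 1 *s row j A) = (\<Sum>j\<in>UNIV. row j A)"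
      by (simp add: sum.remove[of UNIV k])
    also have "\<dots> = s *s (\<chi> j. 1)"
      using s by (simp add: vec_eq_iff sum_component row_def)
    finally show ?thesis .
  qed
  note eqn = this
  from det_row_addcomb[where k=k and c="\<lambda>_. 1" and A=A]
  have "det A = det (\<chi> i. if i = k then s *s (\<chi> j. 1) else row i A)"
    unfolding eqn by simp
  also have "\<dots> = s * det (\<chi> i. if i = k then (\<chi> j. 1) else row i A)"
    by (rule det_row_mul)
  finally show ?thesis .
qed

lemma det_neg: "det (- A :: 'a::comm_ring_1^'n::finite^'n) = (-1) ^ CARD('n) * det A"
proof -
  have e: "(mat (-1) ** A)$i$j = - A$i$j" for i j
  proof -
    have "(mat (-1) ** A)$i$j = (\<Sum>k\<in>UNIV. (if i = k then -1 else 0) * A$k$j)"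
      by (simp add: matrix_matrix_mult_def mat_def)
    also have "\<dots> = (\<Sum>k\<in>UNIV. if k = i then - A$i$j else 0)"
      by (rule sum.cong) auto
    finally show ?thesis by simp
  qed
  have "- A = mat (-1) ** A"
    by (simp add: vec_eq_iff e)
  moreover have "det (mat (-1) :: 'a^'n^'n) = (-1) ^ CARD('n)"
    by (simp add: det_diagonal mat_def)
  ultimately show ?thesis by (simp add: det_mul)
qed

lemma det0_kernel:
  fixes A :: "'a::field^'n::finite^'n"
  assumes "det A = 0"
  shows "\<exists>w. w \<noteq> 0 \<and> A *v w = 0"
proof -
  have "\<not> inj ((*v) A)"
    using det_nz_iff_inj_gen[of "(*v) A"] assms by simp
  then obtain x y where "x \<noteq> y" "A *v x = A *v y" unfolding inj_def by blast
  then show ?thesis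
    by (intro exI[of _ "x - y"]) (simp add: matrix_vector_mult_diff_distrib)
qed

lemma kernel_det:
  fixes A :: "'a::field^'n::finite^'n"
  assumes "\<And>w. A *v w = 0 \<Longrightarrow> w = 0"
  shows "det A \<noteq> 0"
proof -
  have "inj ((*v) A)"
  proof (rule injI)
    fix x y assume "A *v x = A *v y"
    then have "A *v (x - y) = 0" by (simp add: matrix_vector_mult_diff_distrib)
    then show "x = y" using assms[of "x - y"] by simp
  qed
  then show ?thesis using det_nz_iff_inj_gen[of "(*v) A"] by simp
qed

section \<open>Characteristic polynomial evaluation\<close>

lemma poly_charpoly:
  "poly (charpoly A) x = det (\<chi> i j. (if i = j then x else 0) - A$i$j)"
proof -
  have "poly (charpoly A) x = det (\<chi> i j. poly ((if i = j then [:0, 1:] else 0) - [:A $ i $ j:]) x)"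
    unfolding charpoly_def
    using det_hom[of "\<lambda>p. poly p x" "\<chi> i j. (if i = j then [:0, 1:] else 0) - [:A $ i $ j:]"] by simp
  moreover have "poly ((if i = j then [:0, 1:] else 0) - [:a:]) x = (if i = j then x else 0) - a" for i j :: 'a and a
    by (cases "i = j") simp_all
  ultimately show ?thesis by simp
qed

lemma mp_add: "map_poly complex_of_real (p + q) = map_poly of_real p + map_poly of_real q"
  by (simp add: poly_eq_iff coeff_map_poly)

lemma mp_mult: "map_poly complex_of_real (p * q) = map_poly of_real p * map_poly of_real q"
  by (simp add: poly_eq_iff coeff_map_poly coeff_mult)

lemma mp_diff: "map_poly complex_of_real (p - q) = map_poly of_real p - map_poly of_real q"
  by (simp add: poly_eq_iff coeff_map_poly)

lemma mp_neg: "map_poly complex_of_real (- p) = - map_poly of_real p"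
  by (simp add: poly_eq_iff coeff_map_poly)

lemma poly_charpoly_complex:
  "poly (map_poly complex_of_real (charpoly A)) z
     = det (\<chi> i j. (if i = j then z else 0) - complex_of_real (A$i$j))"
proof -
  have "poly (map_poly complex_of_real (charpoly A)) z
      = det (\<chi> i j. poly (map_poly complex_of_real ((if i = j then [:0, 1:] else 0) - [:A $ i $ j:])) z)"
    unfolding charpoly_def
    using det_hom[of "\<lambda>p. poly (map_poly complex_of_real p) z" "\<chi> i j. (if i = j then [:0, 1:] else 0) - [:A $ i $ j:]"]
    by (simp add: mp_add mp_mult mp_neg)
  moreover have "poly (map_poly complex_of_real ((if i = j then [:0, 1:] else 0) - [:a:])) z = (if i = j then z else 0) - of_real a" for i j :: 'a and a
    by (cases "i = j") (simp_all add: mp_diff map_poly_pCons)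
  ultimately show ?thesis by simp
qed


lemma poly_mp_of_real: "poly (map_poly complex_of_real p) (of_real x) = of_real (poly p x)"
  by (induction p) (auto simp: map_poly_pCons)

lemma split_real_roots:
  fixes p :: "real poly"
  assumes "p \<noteq> 0" "\<forall>z. poly (map_poly complex_of_real p) z = 0 \<longrightarrow> z \<in> \<real>"
  shows "size (proots p) = degree p \<and> poly p 0 = lead_coeff p * (-1) ^ degree p * prod_mset (proots p)"
  using assms
proof (induction "degree p" arbitrary: p)
  case 0
  then have "p = [:coeff p 0:]" by (metis degree_0_id)
  then have "proots p = {#}" by (metis proots_const)
  moreover have "poly p 0 = lead_coeff p" using 0 by (simp add: poly_0_coeff_0)
  ultimately show ?case using 0 by simp
next
  case (Suc n p)
  have dm: "degree (map_poly complex_of_real p) = degree p"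
    by (rule degree_map_poly) simp
  then have "\<not> constant (poly (map_poly complex_of_real p))"
    using Suc.hyps(2) constant_degree by (metis nat.simps(3))
  then obtain z where z: "poly (map_poly complex_of_real p) z = 0"
    using fundamental_theorem_of_algebra by blast
  then have "z \<in> \<real>" using Suc.prems by blast
  then obtain r where zr: "z = of_real r" by (auto elim: Reals_cases)
  have "poly p r = 0" using z zr poly_mp_of_real[of p r] by simp
  then obtain p' where pp: "p = [:-r, 1:] * p'" using poly_eq_0_iff_dvd by (metis dvdE)
  have p'nz: "p' \<noteq> 0" using pp Suc.prems by auto
  have lin: "[:-r, 1:] \<noteq> (0 :: real poly)" by simp
  have dp': "degree p' = n" using Suc.hyps(2) pp degree_mult_eq[OF lin p'nz] by simp
  have lp': "lead_coeff p' = lead_coeff p"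
    unfolding pp lead_coeff_mult by simp
  have roots': "\<forall>z. poly (map_poly complex_of_real p') z = 0 \<longrightarrow> z \<in> \<real>"
  proof (intro allI impI)
    fix w assume "poly (map_poly complex_of_real p') w = 0"
    then have "poly (map_poly complex_of_real p) w = 0" unfolding pp mp_mult by (simp del: mult_pCons_left)
    then show "w \<in> \<real>" using Suc.prems by blast
  qed
  have IH: "size (proots p') = degree p' \<and> poly p' 0 = lead_coeff p' * (-1) ^ degree p' * prod_mset (proots p')"
    using Suc.hyps(1)[of p'] dp'[symmetric] p'nz roots' by blast
  have pr: "proots p = {#r#} + proots p'"
    using pp proots_mult[OF lin p'nz] proots_linear_factor[of "-r"] by simp
  have "poly p 0 = - r * poly p' 0" using pp by simp
  then show ?case using IH pr Suc.hyps(2)[symmetric] dp' lp' by (simp add: algebra_simps)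
qed

lemma charpoly_monic:
  fixes A :: "real^'n::finite^'n"
  shows "degree (charpoly A) = CARD('n) \<and> lead_coeff (charpoly A) = 1"
proof -
  define P :: "real poly^'n^'n" where "P = (\<chi> i j. (if i = j then [:0, 1:] else 0) - [:A $ i $ j:])"
  define T where "T p = of_int (sign p) * (\<Prod>i\<in>UNIV. P$i$(p i))" for p :: "'n \<Rightarrow> 'n"
  let ?PU = "{p. p permutes (UNIV :: 'n set)}"
  have cp: "charpoly A = T id + (\<Sum>p\<in>?PU - {id}. T p)"
    unfolding charpoly_def P_def[symmetric] det_def T_def[symmetric]
    by (rule sum.remove) (auto simp: permutes_id)
  have Pd: "degree (P$i$j) \<le> (if i = j then 1 else 0)" for i j
    by (simp add: P_def)
  have Pnz: "P$i$i \<noteq> 0" for i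
  proof
    assume "P$i$i = 0"
    then have "coeff (P$i$i) 1 = 0" by simp
    then show False by (simp add: P_def)
  qed
  have Tid: "T id = (\<Prod>i\<in>UNIV. P$i$i)" by (simp add: T_def sign_id)
  have dPii: "degree (P$i$i) = 1" for i
  proof -
    have "P$i$i = [:- A$i$i, 1:]" by (simp add: P_def)
    then show ?thesis by simp
  qed
  have lPii: "lead_coeff (P$i$i) = 1" for i
  proof -
    have "P$i$i = [:- A$i$i, 1:]" by (simp add: P_def)
    then show ?thesis by simp
  qed
  have dTid: "degree (T id) = CARD('n)"
    unfolding Tid by (subst degree_prod_eq_sum_degree) (simp_all add: Pnz dPii)
  have lTid: "lead_coeff (T id) = 1"
    unfolding Tid lead_coeff_prod by (simp add: lPii)
  have n0: "CARD('n) > 0" by simp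
  have dT: "degree (T p) \<le> CARD('n) - 1" if p: "p \<in> ?PU - {id}" for p
  proof -
    from p obtain i where i: "p i \<noteq> i" by (auto simp: fun_eq_iff)
    have "degree (\<Prod>l\<in>UNIV. P$l$(p l)) \<le> (\<Sum>l\<in>UNIV. degree (P$l$(p l)))"
      using degree_prod_sum_le[of UNIV "\<lambda>l. P$l$(p l)"] by (simp add: o_def)
    also have "\<dots> = degree (P$i$(p i)) + (\<Sum>l\<in>UNIV-{i}. degree (P$l$(p l)))"
      by (rule sum.remove) auto
    also have "\<dots> \<le> 0 + of_nat (card (UNIV - {i})) * 1"
    proof (intro add_mono sum_bounded_above)
      show "degree (P$i$(p i)) \<le> 0" using Pd[of i "p i"] i by simp
      show "degree (P$l$(p l)) \<le> 1" for l using Pd[of l "p l"] by (simp split: if_splits)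
    qed
    also have "\<dots> = CARD('n) - 1" by (simp add: card_Diff_singleton)
    finally have "degree (\<Prod>l\<in>UNIV. P$l$(p l)) \<le> CARD('n) - 1" .
    moreover have "degree (T p) \<le> degree (of_int (sign p) :: real poly) + degree (\<Prod>l\<in>UNIV. P$l$(p l))"
      unfolding T_def by (rule degree_mult_le)
    ultimately show ?thesis by simp
  qed
  have drest: "degree (\<Sum>p\<in>?PU - {id}. T p) < CARD('n)"
  proof -
    have "degree (\<Sum>p\<in>?PU - {id}. T p) \<le> CARD('n) - 1"
      apply (rule degree_sum_le)
       apply (simp add: finite_permutations)
      apply (erule dT)
      done
    then show ?thesis using n0 by linarith
  qed
  have "degree (charpoly A) = CARD('n)"
    unfolding cp using degree_add_eq_left[of _ "T id"] drest dTid by simp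
  moreover have "lead_coeff (charpoly A) = 1"
  proof -
    have "coeff (\<Sum>p\<in>?PU - {id}. T p) (CARD('n)) = 0" using drest by (simp add: coeff_eq_0)
    then show ?thesis using \<open>degree (charpoly A) = CARD('n)\<close> cp lTid dTid by simp
  qed
  ultimately show ?thesis by simp
qed


lemma delta_sum: "(\<Sum>j\<in>(UNIV::'n::finite set). (if i = j then c else 0) * f j) = c * (f i :: 'a::comm_ring_1)"
proof -
  have "(\<Sum>j\<in>UNIV. (if i = j then c else 0) * f j) = (\<Sum>j\<in>UNIV. if i = j then c * f j else 0)"
    by (rule sum.cong) auto
  then show ?thesis by simp
qed

lemma delta_sum2: "(\<Sum>j\<in>(UNIV::'n::finite set). (if i = j then c else 0)) = (c :: 'a::comm_ring_1)"
  by simp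

lemma cm_mult:
  fixes A :: "'a::comm_ring_1^'n::finite^'n"
  shows "((\<chi> i j. (if i = j then x else 0) - A$i$j) *v w)$i = x * w$i - (A *v w)$i"
proof -
  have "((\<chi> i j. (if i = j then x else 0) - A$i$j) *v w)$i
      = (\<Sum>j\<in>UNIV. (if i = j then x else 0) * w$j) - (\<Sum>j\<in>UNIV. A$i$j * w$j)"
    unfolding matrix_vector_mult_def by (simp only: vec_lambda_beta left_diff_distrib sum_subtractf)
  then show ?thesis by (simp add: matrix_vector_mult_def delta_sum)
qed

lemma det_nz_kernel:
  fixes A :: "'a::field^'n::finite^'n"
  assumes "det A \<noteq> 0" "A *v w = 0"
  shows "w = 0"
proof -
  have "inj ((*v) A)" using det_nz_iff_inj_gen[of "(*v) A"] assms by simp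
  moreover have "A *v w = A *v 0" using assms by simp
  ultimately show ?thesis by (meson injD)
qed

lemma prod_mset_pos: "(\<forall>x\<in>#M. (x::real) > 0) \<Longrightarrow> prod_mset M > 0"
  by (induction M) auto

locale lgraph =
  fixes em :: "'v::finite \<Rightarrow> 'v \<Rightarrow> nat"
  assumes msym: "\<And>v w. em v w = em w v"
    and conn: "\<And>u w. (u, w) \<in> {(a, b). 0 < em a b}\<^sup>*"
begin

definition deg :: "'v \<Rightarrow> nat" where "deg v = (\<Sum>w\<in>UNIV. em v w)"

definition Lint :: "int^'v^'v" where
  "Lint = (\<chi> i j. (if i = j then int (deg i) else 0) - int (em i j))"

definition L :: "real^'v^'v" where "L = rmat Lint"

definition v0 :: 'v where "v0 = undefined"

definition Lp :: "int^'v^'v" where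
  "Lp = (\<chi> i j. if i = v0 \<or> j = v0 then (if i = j then 1 else 0) else Lint$i$j)"

definition J :: "real^'v^'v" where "J = (\<chi> i j. 1)"

lemma L_nth: "L$i$j = (if i = j then real (deg i) else 0) - real (em i j)"
  by (simp add: L_def rmat_def Lint_def)

lemma Lsym: "L$i$j = L$j$i"
  by (simp add: L_nth msym)

lemma Lx: "(L *v x)$i = (\<Sum>j\<in>UNIV. real (em i j) * (x$i - x$j))"
proof -
  have "(L *v x)$i = (\<Sum>j\<in>UNIV. (if i = j then real (deg i) else 0) * x$j) - (\<Sum>j\<in>UNIV. real (em i j) * x$j)"
    unfolding matrix_vector_mult_def L_nth by (simp only: vec_lambda_beta left_diff_distrib sum_subtractf)
  also have "\<dots> = real (deg i) * x$i - (\<Sum>j\<in>UNIV. real (em i j) * x$j)"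
    by (simp only: delta_sum)
  also have "\<dots> = (\<Sum>j\<in>UNIV. real (em i j) * (x$i - x$j))"
    by (simp add: deg_def sum_subtractf right_diff_distrib sum_distrib_right)
  finally show ?thesis .
qed

lemma lap: "laplacian em x = L *v x"
  by (simp add: laplacian_def vec_eq_iff Lx)

lemma Lmat: "matrix (laplacian em) = L"
proof -
  have "(laplacian em (axis j 1))$i = L$i$j" for i j
  proof -
    have "(laplacian em (axis j 1))$i = (\<Sum>k\<in>UNIV. L$i$k * (axis j 1)$k)"
      by (simp add: lap matrix_vector_mult_def)
    also have "\<dots> = (\<Sum>k\<in>UNIV. (if j = k then 1 else 0) * L$i$k)"
      by (rule sum.cong) (auto simp: axis_def)
    finally show ?thesis by (simp only: delta_sum)
  qed
  then show ?thesis by (simp add: matrix_def vec_eq_iff)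
qed

lemma Lrow: "(\<Sum>j\<in>UNIV. L$i$j) = 0"
proof -
  have "(\<Sum>j\<in>UNIV. L$i$j) = (\<Sum>j\<in>UNIV. (if i = j then real (deg i) else 0)) - (\<Sum>j\<in>UNIV. real (em i j))"
    unfolding L_nth by (simp only: sum_subtractf)
  then show ?thesis by (simp add: deg_def)
qed

lemma Lcol: "(\<Sum>i\<in>UNIV. L$i$j) = 0"
  using Lrow[of j] by (simp add: Lsym)

lemma sumLx: "(\<Sum>i\<in>UNIV. (L *v x)$i) = 0"
proof -
  have "(\<Sum>i\<in>UNIV. (L *v x)$i) = (\<Sum>j\<in>UNIV. (\<Sum>i\<in>UNIV. L$i$j) * x$j)"
    by (simp add: matrix_vector_mult_def sum_distrib_right) (rule sum.swap)
  then show ?thesis by (simp add: Lcol)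
qed

lemma quad: "(\<Sum>i\<in>UNIV. x$i * (L *v x)$i) = (\<Sum>i\<in>UNIV. \<Sum>j\<in>UNIV. real (em i j) * (x$i - x$j)^2) / 2"
proof -
  let ?S = "\<Sum>i\<in>UNIV. \<Sum>j\<in>UNIV. real (em i j) * x$i * (x$i - x$j)"
  have S: "(\<Sum>i\<in>UNIV. x$i * (L *v x)$i) = ?S"
    by (simp add: Lx sum_distrib_left algebra_simps)
  have "?S = (\<Sum>j\<in>UNIV. \<Sum>i\<in>UNIV. real (em i j) * x$i * (x$i - x$j))" by (rule sum.swap)
  also have "\<dots> = (\<Sum>i\<in>UNIV. \<Sum>j\<in>UNIV. real (em i j) * x$j * (x$j - x$i))"
    by (simp add: msym)
  finally have S2: "?S = \<dots>" .
  have "2 * ?S = (\<Sum>i\<in>UNIV. \<Sum>j\<in>UNIV. real (em i j) * (x$i - x$j)^2)"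
  proof -
    have "2 * ?S = ?S + (\<Sum>i\<in>UNIV. \<Sum>j\<in>UNIV. real (em i j) * x$j * (x$j - x$i))" using S2 by simp
    also have "\<dots> = (\<Sum>i\<in>UNIV. \<Sum>j\<in>UNIV. real (em i j) * (x$i - x$j)^2)"
      by (simp add: sum.distrib[symmetric] power2_eq_square algebra_simps)
    finally show ?thesis .
  qed
  then show ?thesis using S by simp
qed

lemma quad_nonneg: "(\<Sum>i\<in>UNIV. x$i * (L *v x)$i) \<ge> 0"
  unfolding quad by (intro divide_nonneg_pos sum_nonneg) auto

lemma kerL:
  assumes "L *v x = 0"
  shows "x$u = x$w"
proof -
  have "(\<Sum>i\<in>UNIV. \<Sum>j\<in>UNIV. real (em i j) * (x$i - x$j)^2) = 0"
    using quad[of x] assms by simp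
  note h = this
  define f where "f i j = real (em i j) * (x$i - x$j)^2" for i j
  have fnn: "0 \<le> f i j" for i j by (simp add: f_def)
  have o: "(\<Sum>j\<in>UNIV. f i j) = 0" for i
    using h sum_nonneg_eq_0_iff[of UNIV "\<lambda>i. \<Sum>j\<in>UNIV. f i j"] fnn
    unfolding f_def[symmetric] by (simp add: sum_nonneg)
  have z: "real (em i j) * (x$i - x$j)^2 = 0" for i j
    using o[of i] sum_nonneg_eq_0_iff[of UNIV "f i"] fnn unfolding f_def[symmetric] by simp
  have e: "0 < em a b \<Longrightarrow> x$a = x$b" for a b using z[of a b] by simp
  have "(u, w) \<in> {(a, b). 0 < em a b}\<^sup>*" by (rule conn)
  then show ?thesis
    by (induction rule: rtrancl_induct) (auto dest: e)
qed

lemma Lp_mult_v0: "(rmat Lp *v x)$v0 = x$v0"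
proof -
  have "(rmat Lp *v x)$v0 = (\<Sum>j\<in>UNIV. (if v0 = j then 1 else 0) * x$j)"
    unfolding rmat_mult by (intro sum.cong) (auto simp: Lp_def)
  then show ?thesis by (simp only: delta_sum)
qed

lemma Lp_mult:
  assumes "v \<noteq> v0"
  shows "(rmat Lp *v x)$v = (L *v x)$v - L$v$v0 * x$v0"
proof -
  have "(rmat Lp *v x)$v = (\<Sum>j\<in>UNIV. L$v$j * x$j - (if j = v0 then L$v$v0 * x$v0 else 0))"
    unfolding rmat_mult using assms by (intro sum.cong) (auto simp: Lp_def L_def rmat_def)
  then show ?thesis by (simp add: sum_subtractf matrix_vector_mult_def)
qed

lemma Lp_ker: "rmat Lp *v x = 0 \<Longrightarrow> x = 0"
proof -
  assume h: "rmat Lp *v x = 0"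
  have x0: "x$v0 = 0" using Lp_mult_v0[of x] h by simp
  have a: "(L *v x)$v = 0" if "v \<noteq> v0" for v
    using Lp_mult[OF that, of x] h x0 by simp
  have "(L *v x)$v0 = 0"
  proof -
    have "(\<Sum>i\<in>UNIV. (L *v x)$i) = (L *v x)$v0 + (\<Sum>i\<in>UNIV-{v0}. (L *v x)$i)"
      by (rule sum.remove) auto
    then show ?thesis using sumLx[of x] a by simp
  qed
  then have "L *v x = 0" using a by (metis vec_eq_iff zero_index)
  then have "x$u = x$v0" for u by (rule kerL)
  then show "x = 0" using x0 by (simp add: vec_eq_iff)
qed

lemma det_Lp_nz: "det Lp \<noteq> 0"
proof -
  have "det (rmat Lp) \<noteq> 0" using Lp_ker by (intro kernel_det) auto
  moreover have "det (rmat Lp) = real_of_int (det Lp)" unfolding rmat_def by (rule det_of_int)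
  ultimately show ?thesis by simp
qed

end


definition cmat :: "'a::comm_ring_1 \<Rightarrow> 'a^'n::finite^'n \<Rightarrow> 'a^'n^'n" where
  "cmat x A = (\<chi> i j. (if i = j then x else 0) - A$i$j)"

lemma E_col_mult:
  fixes R :: "'a::comm_ring_1^'n::finite^'n"
  shows "((\<chi> i j. (if i = j then 1 else 0) + (if j = k \<and> i \<noteq> k then c i else 0)) ** R)$i$j
        = R$i$j + (if i \<noteq> k then c i * R$k$j else 0)"
proof -
  have "((\<chi> i j. (if i = j then 1 else 0) + (if j = k \<and> i \<noteq> k then c i else 0)) ** R)$i$j
      = (\<Sum>l\<in>UNIV. (if i = l then 1 else 0) * R$l$j) + (\<Sum>l\<in>UNIV. (if k = l then (if i \<noteq> k then c i else 0) else 0) * R$l$j)"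
    unfolding matrix_matrix_mult_def vec_lambda_beta sum.distrib[symmetric] by (rule sum.cong) (auto simp: distrib_right)
  then show ?thesis by (simp only: delta_sum) simp
qed

lemma det_E_col: "det (\<chi> i j. (if i = j then 1 else 0) + (if j = k \<and> i \<noteq> k then c i else 0) :: 'a::field^'n::finite^'n) = 1"
  by (rule det_I_col)

context lgraph
begin

lemma D1: "x * det (cmat x (L + J)) = (x - real CARD('v)) * det (cmat x L)"
proof -
  let ?k = v0
  define R where "R = (\<chi> i. if i = ?k then (\<chi> j. 1) else row i (cmat x L))"
  define R' where "R' = (\<chi> i. if i = ?k then (\<chi> j. 1) else row i (cmat x (L + J)))"
  define E :: "real^'v^'v" where "E = (\<chi> i j. (if i = j then 1 else 0) + (if j = ?k \<and> i \<noteq> ?k then -1 else 0))"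
  have cs1: "(\<Sum>i\<in>UNIV. cmat x L $ i $ j) = x" for j
  proof -
    have "(\<Sum>i\<in>UNIV. cmat x L $ i $ j) = (\<Sum>i\<in>UNIV. (if i = j then x else 0)) - (\<Sum>i\<in>UNIV. L$i$j)"
      unfolding cmat_def by (simp only: vec_lambda_beta sum_subtractf)
    then show ?thesis by (simp add: Lcol)
  qed
  have cs2: "(\<Sum>i\<in>UNIV. cmat x (L + J) $ i $ j) = x - real CARD('v)" for j
  proof -
    have e: "cmat x (L + J) $ i $ j = cmat x L $ i $ j - 1" for i
      by (simp add: cmat_def J_def)
    have "(\<Sum>i\<in>UNIV. cmat x (L + J) $ i $ j) = (\<Sum>i\<in>UNIV. cmat x L $ i $ j) - (\<Sum>i\<in>(UNIV::'v set). (1::real))"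
      unfolding e by (simp only: sum_subtractf)
    then show ?thesis using cs1 by simp
  qed
  have d1: "det (cmat x L) = x * det R" unfolding R_def by (rule det_colsum[OF cs1])
  have d2: "det (cmat x (L + J)) = (x - real CARD('v)) * det R'" unfolding R'_def by (rule det_colsum[OF cs2])
  have "R' = E ** R"
  proof -
    have "(E ** R)$i$j = R'$i$j" for i j
    proof -
      have "(E ** R)$i$j = R$i$j + (if i \<noteq> ?k then - 1 * R$?k$j else 0)"
        unfolding E_def by (rule E_col_mult)
      then show ?thesis
        by (cases "i = ?k") (auto simp: R_def R'_def row_def cmat_def J_def)
    qed
    then show ?thesis by (simp add: vec_eq_iff)
  qed
  then have "det R' = det R" using det_E_col[of ?k "\<lambda>_. -1 :: real"] by (simp add: det_mul E_def)
  then show ?thesis using d1 d2 by simp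
qed

lemma D2: "det (L + J) = real CARD('v) ^ 2 * det (rmat Lp)"
proof -
  let ?k = v0
  let ?n = "real CARD('v)"
  define R1 where "R1 = (\<chi> i. if i = ?k then (\<chi> j. 1) else row i (L + J))"
  define R0 where "R0 = (\<chi> i. if i = ?k then (\<chi> j. 1) else row i L)"
  define E :: "real^'v^'v" where "E = (\<chi> i j. (if i = j then 1 else 0) + (if j = ?k \<and> i \<noteq> ?k then 1 else 0))"
  have cs: "(\<Sum>i\<in>UNIV. (L + J) $ i $ j) = ?n" for j
    by (simp add: J_def sum.distrib Lcol)
  have d1: "det (L + J) = ?n * det R1" unfolding R1_def by (rule det_colsum[OF cs])
  have "R1 = E ** R0"
  proof -
    have "(E ** R0)$i$j = R1$i$j" for i j
    proof -
      have "(E ** R0)$i$j = R0$i$j + (if i \<noteq> ?k then 1 * R0$?k$j else 0)"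
        unfolding E_def by (rule E_col_mult)
      then show ?thesis
        by (cases "i = ?k") (auto simp: R0_def R1_def row_def J_def)
    qed
    then show ?thesis by (simp add: vec_eq_iff)
  qed
  then have d2: "det R1 = det R0" using det_E_col[of ?k "\<lambda>_. 1 :: real"] by (simp add: det_mul E_def)
  define T0 where "T0 = transpose R0"
  have d3: "det R0 = det T0" by (simp add: T0_def)
  define ek :: "real^'v" where "ek = (\<chi> j. if j = ?k then 1 else 0)"
  have rs: "row ?k T0 + (\<Sum>j\<in>UNIV-{?k}. 1 *s row j T0) = ?n *s ek"
  proof -
    have "row ?k T0 + (\<Sum>j\<in>UNIV-{?k}. 1 *s row j T0) = (\<Sum>j\<in>UNIV. row j T0)"
      by (simp add: sum.remove[of UNIV ?k])
    also have "\<dots> = ?n *s ek"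
    proof -
      have "(\<Sum>j\<in>UNIV. row j T0) $ l = (?n *s ek) $ l" for l
      proof (cases "l = ?k")
        case True
        then show ?thesis by (simp add: sum_component row_def T0_def R0_def transpose_def ek_def)
      next
        case False
        then have "(\<Sum>j\<in>UNIV. row j T0) $ l = (\<Sum>j\<in>UNIV. L$l$j)"
          by (simp add: sum_component row_def T0_def R0_def transpose_def)
        then show ?thesis using False by (simp add: Lrow ek_def)
      qed
      then show ?thesis by (simp add: vec_eq_iff)
    qed
    finally show ?thesis .
  qed
  from det_row_addcomb[where k = ?k and c = "\<lambda>_. 1" and A = T0]
  have "det T0 = det (\<chi> i. if i = ?k then ?n *s ek else row i T0)"
    unfolding rs by simp
  also have "\<dots> = ?n * det (\<chi> i. if i = ?k then ek else row i T0)"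
    by (rule det_row_mul)
  finally have d4: "det T0 = ?n * det (\<chi> i. if i = ?k then ek else row i T0)" .
  define P where "P = transpose (rmat Lp)"
  define E2 :: "real^'v^'v" where "E2 = (\<chi> i j. (if i = j then 1 else 0) + (if j = ?k \<and> i \<noteq> ?k then 1 else 0))"
  have "(\<chi> i. if i = ?k then ek else row i T0) = E2 ** P"
  proof -
    have "(E2 ** P)$i$j = (\<chi> i. if i = ?k then ek else row i T0)$i$j" for i j
    proof -
      have "(E2 ** P)$i$j = P$i$j + (if i \<noteq> ?k then 1 * P$?k$j else 0)"
        unfolding E2_def by (rule E_col_mult)
      then show ?thesis
        by (cases "i = ?k"; cases "j = ?k")
           (auto simp: P_def transpose_def rmat_def Lp_def ek_def row_def T0_def R0_def L_def)
    qed
    then show ?thesis by (simp add: vec_eq_iff)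
  qed
  then have d5: "det (\<chi> i. if i = ?k then ek else row i T0) = det (rmat Lp)"
    using det_E_col[of ?k "\<lambda>_. 1 :: real"] by (simp add: det_mul E2_def P_def)
  show ?thesis using d1 d2 d3 d4 d5 by (simp add: power2_eq_square)
qed

end


lemma cmat_0: "cmat 0 A = - A"
  by (simp add: cmat_def vec_eq_iff)

lemma poly_charpoly_cmat: "poly (charpoly A) x = det (cmat x A)"
  by (simp add: poly_charpoly cmat_def)

context lgraph
begin

lemma cp_rel: "[:0, 1:] * charpoly (L + J) = [:- real CARD('v), 1:] * charpoly L"
proof -
  have "poly ([:0, 1:] * charpoly (L + J)) x = poly ([:- real CARD('v), 1:] * charpoly L) x" for x
  proof -
    have "poly ([:0, 1:] * charpoly (L + J)) x = x * det (cmat x (L + J))"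
      by (simp add: poly_charpoly_cmat)
    also have "\<dots> = (x - real CARD('v)) * det (cmat x L)" by (rule D1)
    also have "\<dots> = poly ([:- real CARD('v), 1:] * charpoly L) x"
      by (simp add: poly_charpoly_cmat algebra_simps)
    finally show ?thesis .
  qed
  then show ?thesis using poly_eq_poly_eq_iff by blast
qed

lemma ones_ne0: "(\<chi> j. (1 :: 'a::zero_neq_one)) \<noteq> (0 :: 'a^'n::finite)"
  by (simp add: vec_eq_iff)

lemma cp_L0: "poly (charpoly L) 0 = 0"
proof (rule ccontr)
  assume "poly (charpoly L) 0 \<noteq> 0"
  then have d: "det (cmat 0 L) \<noteq> 0" by (simp add: poly_charpoly_cmat)
  have "(cmat 0 L *v (\<chi> j. 1)) = 0"
  proof -
    have "(cmat 0 L *v (\<chi> j. 1))$i = 0" for i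
    proof -
      have "(cmat 0 L *v (\<chi> j. 1))$i = 0 * 1 - (L *v (\<chi> j. 1))$i"
        unfolding cmat_def by (subst cm_mult) simp
      also have "(L *v (\<chi> j. 1))$i = (\<Sum>j\<in>UNIV. L$i$j)" by (simp add: matrix_vector_mult_def)
      finally show ?thesis by (simp add: Lrow)
    qed
    then show ?thesis by (simp add: vec_eq_iff)
  qed
  then have "(\<chi> j. (1::real)) = (0 :: real^'v)" using det_nz_kernel[OF d] by blast
  then show False using ones_ne0 by blast
qed

lemma roots_nonneg:
  assumes "poly (charpoly L) r = 0"
  shows "r \<ge> 0"
proof -
  have "det (cmat r L) = 0" using assms by (simp add: poly_charpoly_cmat)
  then obtain w where w: "w \<noteq> 0" "cmat r L *v w = 0" using det0_kernel by blast
  have e: "(L *v w)$i = r * w$i" for i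
  proof -
    have "(cmat r L *v w)$i = r * w$i - (L *v w)$i" unfolding cmat_def by (rule cm_mult)
    then show ?thesis using w(2) by simp
  qed
  have "(\<Sum>i\<in>UNIV. w$i * (L *v w)$i) = r * (\<Sum>i\<in>UNIV. (w$i)^2)"
    by (simp add: e sum_distrib_left power2_eq_square algebra_simps)
  moreover have "(\<Sum>i\<in>UNIV. (w$i)^2) > 0"
  proof -
    obtain i where "w$i \<noteq> 0" using w(1) by (metis vec_eq_iff zero_index)
    then have "(w$i)^2 > 0" by simp
    moreover have "(w$i)^2 \<le> (\<Sum>i\<in>UNIV. (w$i)^2)"
      by (rule member_le_sum) auto
    ultimately show ?thesis by linarith
  qed
  ultimately show ?thesis using quad_nonneg[of w] by (metis zero_le_mult_iff not_less)
qed

lemma roots_real: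
  assumes "poly (map_poly complex_of_real (charpoly L)) z = 0"
  shows "z \<in> \<real>"
proof -
  define A :: "complex^'v^'v" where "A = (\<chi> i j. complex_of_real (L$i$j))"
  have "det (\<chi> i j. (if i = j then z else 0) - A$i$j) = 0"
    using assms by (simp add: poly_charpoly_complex A_def)
  then obtain w where w: "w \<noteq> 0" "(\<chi> i j. (if i = j then z else 0) - A$i$j) *v w = 0"
    using det0_kernel by blast
  have e: "(A *v w)$i = z * w$i" for i
    using cm_mult[of z A w i] w(2) by simp
  define s where "s = (\<Sum>i\<in>UNIV. cnj (w$i) * (A *v w)$i)"
  define N where "N = (\<Sum>i\<in>UNIV. cnj (w$i) * w$i)"
  have sN: "s = z * N" by (simp add: s_def N_def e sum_distrib_left algebra_simps)
  have s2: "s = (\<Sum>i\<in>UNIV. \<Sum>j\<in>UNIV. complex_of_real (L$i$j) * cnj (w$i) * w$j)"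
    by (simp add: s_def A_def matrix_vector_mult_def sum_distrib_left algebra_simps)
  have "cnj s = (\<Sum>i\<in>UNIV. \<Sum>j\<in>UNIV. complex_of_real (L$i$j) * w$i * cnj (w$j))"
    by (simp add: s2)
  also have "\<dots> = (\<Sum>j\<in>UNIV. \<Sum>i\<in>UNIV. complex_of_real (L$i$j) * w$i * cnj (w$j))"
    by (rule sum.swap)
  also have "\<dots> = s"
    unfolding s2 by (simp add: Lsym[of _ "_"] mult.commute mult.left_commute)
  finally have cs: "cnj s = s" .
  define M where "M = (\<Sum>i\<in>UNIV. (cmod (w$i))^2)"
  have t: "cnj (w$i) * w$i = complex_of_real ((cmod (w$i))^2)" for i
    by (metis complex_norm_square mult.commute)
  have NM: "N = complex_of_real M"
    by (simp only: N_def M_def t of_real_sum)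
  have "M > 0"
  proof -
    obtain i where "w$i \<noteq> 0" using w(1) by (metis vec_eq_iff zero_index)
    then have "(cmod (w$i))^2 > 0" by simp
    moreover have "(cmod (w$i))^2 \<le> M" unfolding M_def
      by (rule member_le_sum) auto
    ultimately show ?thesis by linarith
  qed
  then have Nnz: "N \<noteq> 0" using NM by simp
  have zz: "z = s / N" using sN Nnz by simp
  have "cnj z = z" unfolding zz using cs NM by simp
  then show ?thesis using Reals_cnj_iff by blast
qed

lemma det_star_L: "det_star L = real CARD('v) * real_of_int (det Lp) \<and> det Lp > 0"
proof -
  define n where "n = CARD('v)"
  define cp where "cp = charpoly L"
  define cj where "cj = charpoly (L + J)"
  have "[:- 0, 1:] dvd cp" using cp_L0 unfolding cp_def by (subst poly_eq_0_iff_dvd[symmetric])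
  then obtain q where cpq: "cp = [:0, 1:] * q" by (auto elim: dvdE)
  have X: "[:0, 1:] \<noteq> (0 :: real poly)" by simp
  have "[:0, 1:] * cj = [:0, 1:] * ([:- real n, 1:] * q)"
    using cp_rel unfolding cj_def cp_def[symmetric] n_def cpq by (simp add: ac_simps)
  then have cjq: "cj = [:- real n, 1:] * q" using X by simp
  have "poly cj 0 = det (- (L + J))" unfolding cj_def poly_charpoly_cmat cmat_0 ..
  also have "\<dots> = (-1) ^ n * (real n ^ 2 * det (rmat Lp))" unfolding det_neg D2 n_def ..
  finally have "- real n * poly q 0 = (-1) ^ n * (real n ^ 2 * det (rmat Lp))" using cjq by simp
  moreover have n0: "real n > 0" unfolding n_def by simp
  ultimately have "real n * poly q 0 = real n * (- ((-1) ^ n * real n * det (rmat Lp)))"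
    by (simp add: power2_eq_square algebra_simps)
  then have q0: "poly q 0 = - ((-1) ^ n * real n * det (rmat Lp))"
    using n0 mult_left_cancel[of "real n" "poly q 0" "- ((-1) ^ n * real n * det (rmat Lp))"] by linarith
  have dLp: "det (rmat Lp) = real_of_int (det Lp)" unfolding rmat_def by (rule det_of_int)
  have q0nz: "poly q 0 \<noteq> 0" using q0 n0 det_Lp_nz dLp by simp
  then have qnz: "q \<noteq> 0" by auto
  have mon: "degree cp = n" "lead_coeff cp = 1" using charpoly_monic[of L] unfolding cp_def n_def by auto
  have dq: "degree q = n - 1" using mon(1) cpq degree_mult_eq[OF X qnz] by simp
  have lq: "lead_coeff q = 1" using mon(2) qnz unfolding cpq by simp
  have rq: "\<forall>z. poly (map_poly complex_of_real q) z = 0 \<longrightarrow> z \<in> \<real>"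
  proof (intro allI impI)
    fix z assume "poly (map_poly complex_of_real q) z = 0"
    then have "poly (map_poly complex_of_real cp) z = 0" unfolding cpq mp_mult by simp
    then show "z \<in> \<real>" using roots_real unfolding cp_def by blast
  qed
  have sp: "poly q 0 = (-1) ^ (n - 1) * prod_mset (proots q)"
    using split_real_roots[OF qnz rq] dq lq by simp
  have pcp: "proots cp = {#0#} + proots q"
    using proots_mult[OF X qnz] proots_linear_factor[of 0] cpq by simp
  have inq: "e \<in># proots q \<Longrightarrow> poly q e = 0" for e using qnz by simp
  have "filter_mset (\<lambda>e. e \<noteq> 0) (proots q) = proots q"
  proof (rule filter_mset_eq_conv[THEN iffD2], intro conjI)
    show "\<forall>b\<in>#proots q. b \<noteq> 0" using inq q0nz by auto
  qed auto
  then have ds: "det_star L = prod_mset (proots q)"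
    unfolding det_star_def cp_def[symmetric] pcp by simp
  have sgn: "(-1::real) ^ (n - 1) * (-1) ^ n = -1"
  proof -
    have "(n - 1) + n = Suc (2 * (n - 1))" using n0 by simp
    then have "(-1::real) ^ (n - 1) * (-1) ^ n = (-1) ^ Suc (2 * (n - 1))"
      by (metis power_add)
    also have "\<dots> = -1" by simp
    finally show ?thesis .
  qed
  have "det_star L = (-1) ^ (n - 1) * poly q 0"
    using sp ds by (simp add: power_mult_distrib[symmetric])
  also have "\<dots> = real n * det (rmat Lp)"
    unfolding q0 using sgn by (simp add: algebra_simps)
  finally have eq: "det_star L = real n * real_of_int (det Lp)" using dLp by simp
  have "prod_mset (proots q) > 0"
  proof (rule prod_mset_pos, intro ballI)
    fix e assume e: "e \<in># proots q"
    then have "poly cp e = 0" using inq cpq by simp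
    then have "e \<ge> 0" using roots_nonneg unfolding cp_def by blast
    moreover have "e \<noteq> 0" using inq[OF e] q0nz by auto
    ultimately show "e > 0" by simp
  qed
  then have "det_star L > 0" using ds by simp
  then have "det Lp > 0" using eq n0 by (simp add: zero_less_mult_iff)
  then show ?thesis using eq n_def by simp
qed

end


lemma cis_eq_1_iff: "cis t = 1 \<longleftrightarrow> (\<exists>n::int. t = of_int (2 * n) * pi)"
  unfolding cis_conv_exp exp_eq_1 by simp

lemma cis_2pi_eq: "cis (2 * pi * a) = cis (2 * pi * b) \<longleftrightarrow> a - b \<in> \<int>"
proof -
  have nz: "cis (2 * pi * b) \<noteq> 0" by simp
  have "cis (2 * pi * a) = cis (2 * pi * b) \<longleftrightarrow> cis (2 * pi * a) / cis (2 * pi * b) = 1"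
    using nz by (auto simp: field_simps)
  also have "\<dots> \<longleftrightarrow> cis (2 * pi * (a - b)) = 1" by (simp add: cis_divide algebra_simps)
  also have "\<dots> \<longleftrightarrow> (\<exists>n::int. 2 * pi * (a - b) = of_int (2 * n) * pi)" by (rule cis_eq_1_iff)
  also have "\<dots> \<longleftrightarrow> (\<exists>n::int. a - b = of_int n)"
  proof -
    have "2 * pi * (a - b) = of_int (2 * n) * pi \<longleftrightarrow> a - b = of_int n" for n :: int
    proof -
      have "of_int (2 * n) * pi = 2 * pi * (of_int n :: real)" by simp
      then show ?thesis by simp
    qed
    then show ?thesis by simp
  qed
  also have "\<dots> \<longleftrightarrow> a - b \<in> \<int>" by (auto elim: Ints_cases)
  finally show ?thesis .
qed

lemma torus_exp_eq: "torus_exp x = torus_exp y \<longleftrightarrow> (\<forall>v. x$v - y$v \<in> \<int>)"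
  by (simp add: torus_exp_def vec_eq_iff cis_2pi_eq)

lemma frac01:
  fixes a b :: real
  assumes "0 \<le> a" "a < 1" "0 \<le> b" "b < 1" "a - b \<in> \<int>"
  shows "a = b"
proof -
  obtain k where k: "a - b = of_int k" using assms(5) by (auto elim: Ints_cases)
  have "of_int k > (-1::real)" "of_int k < (1::real)" using assms k by linarith+
  then have "k = 0" by linarith
  then show ?thesis using k by simp
qed

lemma continuous_torus_line: "continuous_on UNIV (\<lambda>c::real. torus_exp (s + (\<chi> v. c)))"
  unfolding torus_exp_def by (intro continuous_intros)

context lgraph
begin

definition Pset :: "(real^'v) set" where "Pset = Sset Lp"

definition circ :: "real^'v \<Rightarrow> (complex^'v) set" where
  "circ s = (\<lambda>c. torus_exp (s + (\<chi> v. c))) ` UNIV"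

lemma Pset_v0:
  assumes "s \<in> Pset" shows "s$v0 = 0"
proof -
  have "(rmat Lp *v s)$v0 \<in> \<int>" "0 \<le> s$v0" "s$v0 < 1" using assms by (auto simp: Pset_def Sset_def)
  then show ?thesis using Lp_mult_v0[of s] frac01[of "s$v0" 0] by simp
qed

lemma Lconst: "L *v (x + (\<chi> v. c)) = L *v x"
proof -
  have "(L *v (\<chi> v. c))$i = 0" for i
    by (simp add: matrix_vector_mult_def sum_distrib_right[symmetric] Lrow)
  then show ?thesis by (simp add: matrix_vector_right_distrib vec_eq_iff)
qed

lemma Lconst': "L *v (x - (\<chi> v. c)) = L *v x"
  using Lconst[of "x - (\<chi> v. c)" c] by simp

lemma harm_P:
  assumes "s \<in> Pset"
  shows "(L *v s)$v \<in> \<int>"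
proof -
  have s0: "s$v0 = 0" using Pset_v0[OF assms] .
  have a: "(L *v s)$w \<in> \<int>" if "w \<noteq> v0" for w
  proof -
    have "(rmat Lp *v s)$w \<in> \<int>" using assms by (simp add: Pset_def Sset_def)
    then show ?thesis using Lp_mult[OF that, of s] s0 by simp
  qed
  show ?thesis
  proof (cases "v = v0")
    case True
    have "(\<Sum>i\<in>UNIV. (L *v s)$i) = (L *v s)$v0 + (\<Sum>i\<in>UNIV-{v0}. (L *v s)$i)"
      by (rule sum.remove) auto
    then have "(L *v s)$v0 = - (\<Sum>i\<in>UNIV-{v0}. (L *v s)$i)" using sumLx[of s] by simp
    also have "\<dots> \<in> \<int>" using a by (intro Ints_minus Ints_sum) auto
    finally show ?thesis using True by simp
  next
    case False then show ?thesis using a by simp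
  qed
qed

lemma X_eq: "harmonic_mod1 em = (\<Union>s\<in>Pset. circ s)"
proof (intro equalityI subsetI)
  fix z assume "z \<in> harmonic_mod1 em"
  then obtain y where y: "\<forall>v. (L *v y)$v \<in> \<int>" and z: "z = torus_exp y"
    by (auto simp: harmonic_mod1_def lap)
  define c where "c = y$v0"
  define y' where "y' = y - (\<chi> v. c)"
  define s where "s = (\<chi> v. frac (y'$v))"
  have sy: "\<forall>v. (s - y')$v \<in> \<int>" by (simp add: s_def frac_def)
  have Ly': "L *v y' = L *v y" unfolding y'_def by (rule Lconst')
  have s0: "s$v0 = 0" by (simp add: s_def y'_def c_def)
  have "s \<in> Pset"
  proof -
    have "(rmat Lp *v s)$v \<in> \<int>" for v
    proof (cases "v = v0")
      case True then show ?thesis using Lp_mult_v0[of s] s0 by simp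
    next
      case False
      have "(rmat Lint *v s)$v \<in> \<int> \<longleftrightarrow> (rmat Lint *v y')$v \<in> \<int>" by (rule int_shift[OF sy])
      then have "(L *v s)$v \<in> \<int>" using y Ly' by (simp add: L_def)
      then show ?thesis using Lp_mult[OF False, of s] s0 by simp
    qed
    moreover have "0 \<le> s$v \<and> s$v < 1" for v by (simp add: s_def frac_lt_1)
    ultimately show ?thesis by (simp add: Pset_def Sset_def)
  qed
  moreover have "z = torus_exp (s + (\<chi> v. c))"
  proof -
    have "\<forall>v. y$v - (s + (\<chi> v. c))$v \<in> \<int>"
      by (simp add: s_def y'_def frac_def)
    then show ?thesis unfolding z torus_exp_eq .
  qed
  ultimately show "z \<in> (\<Union>s\<in>Pset. circ s)" by (auto simp: circ_def)
next
  fix z assume "z \<in> (\<Union>s\<in>Pset. circ s)"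
  then obtain s c where s: "s \<in> Pset" and z: "z = torus_exp (s + (\<chi> v. c))"
    by (auto simp: circ_def)
  have "\<forall>v. (L *v (s + (\<chi> v. c)))$v \<in> \<int>" unfolding Lconst using harm_P[OF s] by blast
  then show "z \<in> harmonic_mod1 em" unfolding harmonic_mod1_def lap z by blast
qed

lemma circ_connected: "connected (circ s)"
  unfolding circ_def by (rule connected_continuous_image[OF continuous_torus_line connected_UNIV])

lemma circ_compact: "compact (circ s)"
proof -
  have "circ s = (\<lambda>c. torus_exp (s + (\<chi> v. c))) ` {0..1}"
  proof
    show "(\<lambda>c. torus_exp (s + (\<chi> v. c))) ` {0..1} \<subseteq> circ s" by (auto simp: circ_def)
    show "circ s \<subseteq> (\<lambda>c. torus_exp (s + (\<chi> v. c))) ` {0..1}"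
    proof
      fix z assume "z \<in> circ s"
      then obtain c where z: "z = torus_exp (s + (\<chi> v. c))" by (auto simp: circ_def)
      have "z = torus_exp (s + (\<chi> v. frac c))"
        unfolding z torus_exp_eq by (simp add: frac_def)
      moreover have "frac c \<in> {0..1}" using frac_lt_1[of c] by simp
      ultimately show "z \<in> (\<lambda>c. torus_exp (s + (\<chi> v. c))) ` {0..1}" by blast
    qed
  qed
  also have "compact \<dots>"
    by (rule compact_continuous_image[OF continuous_on_subset[OF continuous_torus_line] compact_Icc]) simp
  finally show ?thesis .
qed

lemma circ_ne: "circ s \<noteq> {}" by (simp add: circ_def)

lemma circ_disj:
  assumes "s \<in> Pset" "s' \<in> Pset" "circ s \<inter> circ s' \<noteq> {}"
  shows "s = s'"
proof -
  obtain c c' where e: "torus_exp (s + (\<chi> v. c)) = torus_exp (s' + (\<chi> v. c'))"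
    using assms(3) by (auto simp: circ_def)
  then have d: "\<forall>v. (s$v + c) - (s'$v + c') \<in> \<int>" unfolding torus_exp_eq by simp
  have "c - c' \<in> \<int>" using d[rule_format, of v0] Pset_v0[OF assms(1)] Pset_v0[OF assms(2)] by simp
  have "s$v = s'$v" for v
  proof (rule frac01)
    show "0 \<le> s$v" "s$v < 1" using assms(1) by (auto simp: Pset_def Sset_def)
    show "0 \<le> s'$v" "s'$v < 1" using assms(2) by (auto simp: Pset_def Sset_def)
    have "(s$v + c) - (s'$v + c') - (c - c') \<in> \<int>"
      using d \<open>c - c' \<in> \<int>\<close> Ints_diff by blast
    then show "s$v - s'$v \<in> \<int>" by simp
  qed
  then show ?thesis by (simp add: vec_eq_iff)
qed

lemma Pset_finite: "finite Pset" and Pset_card: "card Pset = nat (det Lp)"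
proof -
  have "card Pset = nat \<bar>det Lp\<bar>" unfolding Pset_def by (rule card_Sset_det[OF det_Lp_nz])
  then show c: "card Pset = nat (det Lp)" using det_star_L by simp
  show "finite Pset" using c det_star_L by (metis card.infinite nat_0_iff not_less)
qed

lemma comp_circ:
  assumes s: "s \<in> Pset" and x: "x \<in> circ s"
  shows "connected_component_set (harmonic_mod1 em) x = circ s"
proof
  let ?X = "harmonic_mod1 em"
  have sub: "circ s \<subseteq> ?X" using X_eq s by auto
  show "circ s \<subseteq> connected_component_set ?X x"
    by (rule connected_component_maximal[OF x circ_connected sub])
  define K where "K = connected_component_set ?X x"
  define F where "F = (\<Union>s'\<in>Pset-{s}. circ s')"
  have cF: "closed F" unfolding F_def
    using Pset_finite by (intro closed_Union) (auto intro: compact_imp_closed circ_compact)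
  have cC: "closed (circ s)" by (rule compact_imp_closed[OF circ_compact])
  have KX: "K \<subseteq> ?X" unfolding K_def by (rule connected_component_subset)
  have XF: "?X = circ s \<union> F" unfolding X_eq F_def using s by blast
  have dF: "circ s \<inter> F = {}" unfolding F_def using circ_disj s by blast
  have T1: "K \<inter> circ s = K \<inter> (- F)" using KX XF dF by blast
  have "openin (top_of_set K) (K \<inter> circ s)" unfolding T1 using cF by (intro openin_open_Int) auto
  moreover have "closedin (top_of_set K) (K \<inter> circ s)" using cC by (rule closedin_closed_Int)
  moreover have "x \<in> ?X" using x sub by blast
  then have "x \<in> K" unfolding K_def by simp
  ultimately have "K \<inter> circ s = K"
    using connected_clopen[THEN iffD1, OF connected_connected_component[of ?X x], folded K_def, rule_format,
        of "K \<inter> circ s"] x by blast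
  then show "connected_component_set ?X x \<subseteq> circ s" unfolding K_def by blast
qed

lemma components_eq: "components (harmonic_mod1 em) = circ ` Pset"
proof (intro equalityI subsetI)
  fix S assume "S \<in> components (harmonic_mod1 em)"
  then obtain x where x: "x \<in> harmonic_mod1 em" and S: "S = connected_component_set (harmonic_mod1 em) x"
    by (auto simp: components_iff)
  then obtain s where s: "s \<in> Pset" "x \<in> circ s" using X_eq by auto
  then show "S \<in> circ ` Pset" using comp_circ S by auto
next
  fix S assume "S \<in> circ ` Pset"
  then obtain s where s: "s \<in> Pset" and S: "S = circ s" by auto
  obtain x where x: "x \<in> circ s" using circ_ne by blast
  have "x \<in> harmonic_mod1 em" using X_eq s x by auto
  then show "S \<in> components (harmonic_mod1 em)"
    using comp_circ[OF s x] S by (metis componentsI)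
qed

lemma card_components: "card (components (harmonic_mod1 em)) = nat (det Lp)"
proof -
  have "inj_on circ Pset"
  proof (rule inj_onI)
    fix s s' assume "s \<in> Pset" "s' \<in> Pset" "circ s = circ s'"
    then show "s = s'" using circ_disj circ_ne by (metis inf.idem)
  qed
  then show ?thesis unfolding components_eq by (simp add: card_image Pset_card)
qed

end

theorem lemma3p5:
  fixes em :: "'v::finite \<Rightarrow> 'v \<Rightarrow> nat"
  assumes "multigraph em" and "graph_connected em"
  shows "real (card (components (harmonic_mod1 em)))
           = det_star (matrix (laplacian em)) / real CARD('v)"
proof -
  interpret lgraph em
    using assms by unfold_locales (auto simp: multigraph_def graph_connected_def)
  have "real (card (components (harmonic_mod1 em))) = real_of_int (det Lp)"
    using card_components det_star_L by simp
  also have "\<dots> = det_star (matrix (laplacian em)) / real CARD('v)"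
    using det_star_L by (simp add: Lmat)
  finally show ?thesis .
qed

end
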